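(* Let $p$ be a mixture of $k$ centered/symmetric log-concave distributions on $\mathbb{R}$, i.e. $p=\sum_{i=1}^k w_i p_i$ with $w_i\ge 0$, $\sum_i w_i=1$, and each $p_i$ a log-concave density that is symmetric about $0$. For $\Delta\in\mathbb{R}$ define $r(x)=\frac{p(x)}{p(x+\Delta)}$ and $t(x)=r(x)-1$. Consider parameters $\tau_{\min},\delta$ with $0<\tau_{\min}\le \min(\frac1k,\frac12)$ and $0<\delta\le \min(\frac{\tau_{\min}^2}{k},\frac12)$. Then there exist universal constants $C_1,C_2,C_3,C_4>0$ such that for any $\tau\in[\tau_{\min},1]$ there exists a collection of $r\le C_1\cdot k\log(1/(\delta\tau_{\min}))$ disjoint intervals $I=I_1\cup\dots\cup I_r$ such that $t(x)\ge C_2\cdot\tau$ for all $x\in I$, and \[ \Pr_{x\sim p}[x\in I]\ \ge\ C_3\cdot \Pr_{x\sim p}[t(x)\ge \tau]\ -\ C_4\cdot \delta k/\tau_{\min}^2 . \]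
   Context: A density $q$ on $\mathbb{R}$ is log-concave if $q=e^{-V}$ for a convex function $V:\mathbb{R}\to\mathbb{R}\cup\{+\infty\}$. "Universal constants" means constants independent of $p,k,\Delta,\tau_{\min},\delta,\tau$. *)

theory Defs
  imports "HOL-Analysis.Analysis" "HOL-Library.Extended_Real"
begin

definition ext_convex :: "(real \<Rightarrow> ereal) \<Rightarrow> bool" where
  "ext_convex V \<longleftrightarrow> (\<forall>x. V x \<noteq> -\<infinity>) \<and>
     (\<forall>x y t. 0 \<le> t \<and> t \<le> 1 \<longrightarrow>
        V ((1 - t) * x + t * y) \<le> ereal (1 - t) * V x + ereal t * V y)"

definition log_concave :: "(real \<Rightarrow> real) \<Rightarrow> bool" where
  "log_concave q \<longleftrightarrow> (\<exists>V. ext_convex V \<and>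
     (\<forall>x. q x = (if V x = \<infinity> then 0 else exp (- real_of_ereal (V x)))))"

definition is_density :: "(real \<Rightarrow> real) \<Rightarrow> bool" where
  "is_density q \<longleftrightarrow> q \<in> borel_measurable borel \<and> (\<forall>x. 0 \<le> q x) \<and>
     integrable lborel q \<and> integral\<^sup>L lborel q = 1"

definition symmetric_fun :: "(real \<Rightarrow> real) \<Rightarrow> bool" where
  "symmetric_fun q \<longleftrightarrow> (\<forall>x. q (- x) = q x)"

definition prob_dens :: "(real \<Rightarrow> real) \<Rightarrow> real set \<Rightarrow> real" where
  "prob_dens p S = measure (density lborel (\<lambda>x. ennreal (p x))) S"

text \<open>t(x) = p(x)/p(x+\<Delta>) - 1, computed in the extended reals (a/0 = \<infinity> for a > 0).\<close>
definition ratio_t :: "(real \<Rightarrow> real) \<Rightarrow> real \<Rightarrow> real \<Rightarrow> ereal" where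
  "ratio_t p \<Delta> x = ereal (p x) / ereal (p (x + \<Delta>)) - 1"

end

theory Submission
  imports Defs
begin


lemma lc_nonneg: "log_concave q \<Longrightarrow> 0 \<le> q x"
  unfolding log_concave_def by auto

lemma lc2:
  assumes lc: "log_concave q" and ab: "a \<le> b" and bd: "b \<le> d" and ac: "a \<le> c" and cd: "c \<le> d"
    and s: "b + c = a + d"
  shows "q a * q d \<le> q b * q c"
proof -
  obtain V where cv: "ext_convex V" and qV: "\<And>x. q x = (if V x = \<infinity> then 0 else exp (- real_of_ereal (V x)))"
    using lc unfolding log_concave_def by auto
  have nm: "\<And>x. V x \<noteq> -\<infinity>" using cv unfolding ext_convex_def by auto
  have conv: "\<And>x y t. 0 \<le> t \<Longrightarrow> t \<le> 1 \<Longrightarrow> V ((1 - t) * x + t * y) \<le> ereal (1 - t) * V x + ereal t * V y"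
    using cv unfolding ext_convex_def by auto
  have qnn: "\<And>x. 0 \<le> q x" using qV by simp
  show ?thesis
  proof (cases "V a = \<infinity> \<or> V d = \<infinity>")
    case True
    then have "q a * q d = 0" using qV by auto
    moreover have "0 \<le> q b * q c" using qnn by simp
    ultimately show ?thesis by auto
  next
    case False
    then obtain A D where A: "V a = ereal A" and D: "V d = ereal D" using nm
      by (metis ereal_cases)
    show ?thesis
    proof (cases "a = d")
      case True
      then have "b = a" "c = a" using ab bd ac cd by auto
      then show ?thesis using True by simp
    next
      case False
      then have ad: "a < d" using ab bd by auto
      define l where "l = (b - a) / (d - a)"
      have l0: "0 \<le> l" and l1: "l \<le> 1" using ab bd ad by (auto simp: l_def field_simps)
      have e: "l * (d - a) = b - a" using ad by (simp add: l_def)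
      have bl: "b = (1 - l) * a + l * d" using e by (simp add: algebra_simps)
      have cl: "c = (1 - (1 - l)) * a + (1 - l) * d" using e s by (simp add: algebra_simps)
      have Vb: "V b \<le> ereal ((1 - l) * A + l * D)"
        using conv[OF l0 l1, of a d] bl A D by simp
      have Vc: "V c \<le> ereal ((1 - (1 - l)) * A + (1 - l) * D)"
        using conv[of "1 - l" a d] l0 l1 cl A D by simp
      obtain B where B: "V b = ereal B" using Vb nm by (cases "V b") auto
      obtain C where C: "V c = ereal C" using Vc nm by (cases "V c") auto
      have "B + C \<le> A + D" using Vb Vc B C by (simp add: algebra_simps)
      then have "exp (- (A + D)) \<le> exp (- (B + C))" by simp
      then show ?thesis using A B C D qV by (simp add: exp_add[symmetric])
    qed
  qed
qed

lemma lc_unimodal: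
  assumes lc: "log_concave q" and sy: "symmetric_fun q" and xy: "\<bar>y\<bar> \<le> \<bar>x\<bar>"
  shows "q x \<le> q y"
proof -
  have "q (- \<bar>x\<bar>) * q \<bar>x\<bar> \<le> q y * q (- y)"
    by (rule lc2[OF lc]) (use xy in auto)
  moreover have "q (- \<bar>x\<bar>) = q x" "q \<bar>x\<bar> = q x" "q (-y) = q y"
    using sy unfolding symmetric_fun_def by (auto simp: abs_if)
  ultimately have "(q x)^2 \<le> (q y)^2" by (simp add: power2_eq_square)
  then show ?thesis using lc_nonneg[OF lc, of y] by (meson power2_le_imp_le)
qed

lemma lc_tp2:
  assumes lc: "log_concave q" and xy: "x \<le> y" and d: "0 \<le> D"
  shows "q x * q (y + D) \<le> q (x + D) * q y"
  by (rule lc2[OF lc]) (use xy d in auto)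

lemma lc_mid:
  assumes lc: "log_concave q"
  shows "q 0 * q x \<le> (q (x/2))^2"
proof (cases "0 \<le> x")
  case True
  have "q 0 * q x \<le> q (x/2) * q (x/2)" by (rule lc2[OF lc]) (use True in auto)
  then show ?thesis by (simp add: power2_eq_square)
next
  case False
  have "q x * q 0 \<le> q (x/2) * q (x/2)" by (rule lc2[OF lc]) (use False in auto)
  then show ?thesis by (simp add: power2_eq_square mult.commute)
qed

lemma ratio_ge:
  assumes a: "0 \<le> a" and b: "0 \<le> b" and c: "0 < c"
  shows "(ereal c \<le> ereal a / ereal b - 1) \<longleftrightarrow> (0 < a \<and> (1 + c) * b \<le> a)"
proof (cases "b = 0")
  case True
  have m1: "(-1::ereal) = ereal (-1)" by (simp add: one_ereal_def)
  show ?thesis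
  proof (cases "a = 0")
    case True
    then show ?thesis using \<open>b = 0\<close> c by (simp add: m1)
  next
    case False
    then show ?thesis using \<open>b = 0\<close> a c by simp
  qed
next
  case False
  then have bp: "0 < b" using b by auto
  have "ereal a / ereal b - 1 = ereal (a / b - 1)" using bp by (simp add: one_ereal_def)
  then have "(ereal c \<le> ereal a / ereal b - 1) \<longleftrightarrow> c \<le> a / b - 1" by simp
  also have "\<dots> \<longleftrightarrow> (1 + c) * b \<le> a" using bp by (simp add: field_simps)
  finally show ?thesis using bp c by (smt (verit) mult_pos_pos)
qed



lemma tail_bound:
  assumes d: "is_density q" and lc: "log_concave q" and e: "0 < \<eta>"
  shows "(\<integral>\<^sup>+x. ennreal (q x * indicator {x. q x < \<eta> * q 0} x) \<partial>lborel) \<le> ennreal (2 * sqrt \<eta>)"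
proof -
  have qm[measurable]: "q \<in> borel_measurable borel" and qi: "integrable lborel q" and q1: "integral\<^sup>L lborel q = 1"
    and qn: "\<And>x. 0 \<le> q x"
    using d unfolding is_density_def by auto
  have pw: "q x * indicator {x. q x < \<eta> * q 0} x \<le> sqrt \<eta> * q (x/2)" for x
  proof (cases "q x < \<eta> * q 0 \<and> 0 < q x")
    case True
    have "q x * q x < (\<eta> * q 0) * q x" using True by (simp add: mult_strict_right_mono)
    also have "\<dots> = \<eta> * (q 0 * q x)" by simp
    also have "\<dots> \<le> \<eta> * (q (x/2))^2" using lc_mid[OF lc, of x] e by (simp add: mult_left_mono)
    finally have "(q x)^2 \<le> \<eta> * (q (x/2))^2" by (simp add: power2_eq_square)
    also have "\<eta> * (q (x/2))^2 = (sqrt \<eta> * q (x/2))^2" using e by (simp add: power_mult_distrib)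
    finally have "(q x)^2 \<le> (sqrt \<eta> * q (x/2))^2" .
    then have "q x \<le> sqrt \<eta> * q (x/2)"
      by (meson power2_le_imp_le qn e real_sqrt_ge_zero mult_nonneg_nonneg less_imp_le)
    then show ?thesis using True by simp
  next
    case False
    then have z: "q x * indicator {x. q x < \<eta> * q 0} x = 0" using qn[of x] by (auto simp: indicator_def)
    show ?thesis unfolding z using qn[of "x/2"] e by simp
  qed
  have int1: "(\<integral>\<^sup>+x. ennreal (q x) \<partial>lborel) = 1"
    using nn_integral_eq_integral[OF qi] qn q1 by simp
  have "(\<integral>\<^sup>+x. ennreal (q x) \<partial>lborel) = ennreal \<bar>1/2::real\<bar> * (\<integral>\<^sup>+x. ennreal (q (0 + (1/2) * x)) \<partial>lborel)"
    by (rule nn_integral_real_affine) auto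
  then have "1 = ennreal (1/2) * (\<integral>\<^sup>+x. ennreal (q (x/2)) \<partial>lborel)" using int1 by simp
  then have "ennreal 2 * 1 = (ennreal 2 * ennreal (1/2)) * (\<integral>\<^sup>+x. ennreal (q (x/2)) \<partial>lborel)"
    by (simp add: mult.assoc)
  also have "ennreal 2 * ennreal (1/2) = ennreal (2 * (1/2))" by (rule ennreal_mult[symmetric]) auto
  also have "\<dots> = 1" by simp
  finally have int2: "(\<integral>\<^sup>+x. ennreal (q (x/2)) \<partial>lborel) = 2" by simp
  have "(\<integral>\<^sup>+x. ennreal (q x * indicator {x. q x < \<eta> * q 0} x) \<partial>lborel)
      \<le> (\<integral>\<^sup>+x. ennreal (sqrt \<eta>) * ennreal (q (x/2)) \<partial>lborel)"
  proof (rule nn_integral_mono)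
    fix x
    have "ennreal (sqrt \<eta>) * ennreal (q (x/2)) = ennreal (sqrt \<eta> * q (x/2))"
      by (rule ennreal_mult[symmetric]) (use e qn in auto)
    then show "ennreal (q x * indicator {x. q x < \<eta> * q 0} x) \<le> ennreal (sqrt \<eta>) * ennreal (q (x/2))"
      using pw[of x] by (simp add: ennreal_leI)
  qed
  also have "\<dots> = ennreal (sqrt \<eta>) * 2"
    by (subst nn_integral_cmult) (auto simp: int2)
  also have "\<dots> = ennreal (sqrt \<eta>) * ennreal 2" by simp
  also have "\<dots> = ennreal (sqrt \<eta> * 2)" by (rule ennreal_mult[symmetric]) (use e in auto)
  also have "\<dots> = ennreal (2 * sqrt \<eta>)" by (simp add: mult.commute)
  finally show ?thesis .
qed

lemma dens_reflect:
  assumes pm[measurable]: "p \<in> borel_measurable borel" and sy: "\<And>x. p (- x) = p x"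
  shows "prob_dens p (uminus ` S) = prob_dens p S"
proof -
  have img: "uminus ` S = uminus -` S" for S :: "real set"
    by (force simp: image_iff)
  have um: "uminus \<in> borel_measurable (borel::real measure)" by measurable
  have pre: "uminus -` A \<in> sets borel" if "A \<in> sets borel" for A :: "real set"
    using measurable_sets[OF um that] by simp
  show ?thesis
  proof (cases "S \<in> sets borel")
    case True
    have S2: "uminus ` S \<in> sets borel" unfolding img using pre[OF True] .
    have "emeasure (density lborel (\<lambda>x. ennreal (p x))) (uminus ` S)
        = (\<integral>\<^sup>+x. ennreal (p x) * indicator (uminus ` S) x \<partial>lborel)"
      using S2 by (subst emeasure_density) auto
    also have "\<dots> = ennreal \<bar>-1::real\<bar> * (\<integral>\<^sup>+x. ennreal (p (0 + (-1) * x)) * indicator (uminus ` S) (0 + (-1) * x) \<partial>lborel)"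
      by (rule nn_integral_real_affine) (use S2 in auto)
    also have "\<dots> = (\<integral>\<^sup>+x. ennreal (p x) * indicator S x \<partial>lborel)"
      using sy by (simp add: indicator_def img)
    also have "\<dots> = emeasure (density lborel (\<lambda>x. ennreal (p x))) S"
      using True by (subst emeasure_density) auto
    finally show ?thesis unfolding prob_dens_def measure_def by simp
  next
    case False
    have "uminus ` S \<notin> sets borel"
    proof
      assume "uminus ` S \<in> sets borel"
      then have "uminus -` (uminus ` S) \<in> sets borel" by (rule pre)
      moreover have "uminus -` (uminus ` S) = S" by force
      ultimately show False using False by simp
    qed
    then show ?thesis using False unfolding prob_dens_def
      by (simp add: measure_notin_sets)
  qed
qed



lemma discrete_step: "P (0::nat) \<Longrightarrow> \<not> P n \<Longrightarrow> \<exists>j. j < n \<and> P j \<and> \<not> P (Suc j)"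
proof (induction n)
  case 0 then show ?case by simp
next
  case (Suc n)
  then show ?case by (cases "P n") (auto intro: less_SucI)
qed

locale mixsetup =
  fixes k :: nat and w :: "nat \<Rightarrow> real" and ps :: "nat \<Rightarrow> real \<Rightarrow> real"
    and \<Delta> \<tau>min \<delta> \<tau> :: real
  assumes k1: "k \<ge> 1" and wn: "\<forall>i<k. w i \<ge> 0" and ws: "(\<Sum>i<k. w i) = 1"
    and pd: "\<forall>i<k. is_density (ps i) \<and> log_concave (ps i) \<and> symmetric_fun (ps i)"
    and tm0: "0 < \<tau>min" and tm1: "\<tau>min \<le> min (1 / real k) (1/2)"
    and d0: "0 < \<delta>" and d1: "\<delta> \<le> min (\<tau>min\<^sup>2 / real k) (1/2)"
    and t0: "\<tau>min \<le> \<tau>" and t1: "\<tau> \<le> 1" and D0: "0 \<le> \<Delta>"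
begin

definition q where "q i x = w i * ps i x"
definition p where "p x = (\<Sum>i<k. q i x)"
definition \<eta> where "\<eta> = \<delta>^2"
definition th :: "nat \<Rightarrow> real" where "th j = \<tau>/4 * 2^j"
definition JJ where "JJ = nat \<lceil>log 2 (2/\<tau>)\<rceil>"
definition U where "U i j = {x. -\<Delta>/2 < x \<and> (1 + th j) * q i (x+\<Delta>) \<le> q i x}"
definition lev where "lev i x = Max (insert 0 {th j | j. j \<le> JJ \<and> x \<in> U i j})"
definition f where "f x = (\<Sum>i<k. lev i x * q i x)"
definition R where "R = (\<Union>i\<in>{i. i<k \<and> 0 < q i 0}. {\<lceil>log 2 (\<eta> * q i 0)\<rceil> .. \<lceil>log 2 (2 * real k * q i 0)\<rceil>})"
definition Pp where "Pp n = {x. 0 < x \<and> p x \<le> 2 powr (real_of_int n)}"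
definition Pm where "Pm n = {x. 0 < x \<or> 2 powr (real_of_int n) < p x}"
definition F where "F = {{x. -\<Delta>/2 < x}, {x. 0 < x}} \<union> (\<lambda>(i,j). U i j) ` ({..<k} \<times> {..JJ}) \<union> Pp ` R \<union> Pm ` R"
definition cell where "cell x = {y. \<forall>K\<in>F. y \<in> K \<longleftrightarrow> x \<in> K}"
definition JC where "JC Q = {x\<in>Q. -\<Delta>/2 < x \<and> 0 < p x \<and> (\<forall>y\<in>Q. \<tau>/16 * p y \<le> f x)}"
definition Bad where "Bad = {x. \<not> (\<exists>i<k. p x \<le> 2 * real k * q i x \<and> \<eta> * q i 0 \<le> q i x)}"

lemma tau0: "0 < \<tau>" using tm0 t0 by simp

lemma lcps: "i < k \<Longrightarrow> log_concave (ps i)" using pd by auto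
lemma syps: "i < k \<Longrightarrow> symmetric_fun (ps i)" using pd by auto

lemma q_nn: "i < k \<Longrightarrow> 0 \<le> q i x"
  unfolding q_def using wn lc_nonneg[OF lcps] by simp

lemma q_uni: "i < k \<Longrightarrow> \<bar>y\<bar> \<le> \<bar>x\<bar> \<Longrightarrow> q i x \<le> q i y"
  unfolding q_def using wn lc_unimodal[OF lcps syps] by (simp add: mult_left_mono)

lemma q_tp2: assumes "i < k" "x \<le> y" shows "q i x * q i (y + \<Delta>) \<le> q i (x + \<Delta>) * q i y"
proof -
  have "ps i x * ps i (y + \<Delta>) \<le> ps i (x + \<Delta>) * ps i y"
    using lc_tp2[OF lcps[OF assms(1)] assms(2) D0] .
  then have "(w i * w i) * (ps i x * ps i (y + \<Delta>)) \<le> (w i * w i) * (ps i (x + \<Delta>) * ps i y)"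
    by (rule mult_left_mono) simp
  then show ?thesis unfolding q_def by (simp add: algebra_simps)
qed

lemma q_sym: "i < k \<Longrightarrow> q i (- x) = q i x"
  unfolding q_def using syps unfolding symmetric_fun_def by simp

lemma q_max: "i < k \<Longrightarrow> q i x \<le> q i 0"
  by (rule q_uni) auto

lemma p_nn: "0 \<le> p x" unfolding p_def by (rule sum_nonneg) (simp add: q_nn)

lemma p_uni: "\<bar>y\<bar> \<le> \<bar>x\<bar> \<Longrightarrow> p x \<le> p y" unfolding p_def by (rule sum_mono) (simp add: q_uni)

lemma p_sym: "p (- x) = p x" unfolding p_def by (simp add: q_sym)

lemma q_le_p: "i < k \<Longrightarrow> q i x \<le> p x"
  unfolding p_def by (rule member_le_sum) (auto simp: q_nn)

lemma shift_le: "i < k \<Longrightarrow> -\<Delta>/2 < x \<Longrightarrow> q i (x + \<Delta>) \<le> q i x"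
  by (rule q_uni) (use D0 in auto)

lemma shift_ge_p: "x \<le> -\<Delta>/2 \<Longrightarrow> p x \<le> p (x + \<Delta>)"
  by (rule p_uni) (use D0 in auto)

lemma th_nn: "0 \<le> th j" unfolding th_def using tau0 by simp
lemma th_Suc: "th (Suc j) = 2 * th j" unfolding th_def by simp
lemma th_0: "th 0 = \<tau>/4" unfolding th_def by simp

lemma JJ_bounds: "2/\<tau> \<le> 2^JJ" "2^JJ < 4/\<tau>"
proof -
  have l1: "1 \<le> log 2 (2/\<tau>)" using tau0 t1 by (simp add: le_log_iff field_simps)
  have JJr: "real JJ = real_of_int \<lceil>log 2 (2/\<tau>)\<rceil>" unfolding JJ_def using l1 by simp
  have "(2::real)^JJ = 2 powr (real JJ)" by (simp add: powr_realpow)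
  also have "\<dots> = 2 powr real_of_int \<lceil>log 2 (2/\<tau>)\<rceil>" using JJr by simp
  finally have e: "(2::real)^JJ = 2 powr real_of_int \<lceil>log 2 (2/\<tau>)\<rceil>" .
  have "2/\<tau> = 2 powr (log 2 (2/\<tau>))" using tau0 by simp
  also have "\<dots> \<le> 2 powr real_of_int \<lceil>log 2 (2/\<tau>)\<rceil>" by (rule powr_mono) auto
  finally show "2/\<tau> \<le> 2^JJ" using e by simp
  have "2 powr real_of_int \<lceil>log 2 (2/\<tau>)\<rceil> < 2 powr (log 2 (2/\<tau>) + 1)"
    by (rule powr_less_mono) linarith+
  also have "\<dots> = 4/\<tau>" using tau0 by (simp add: powr_add)
  finally show "2^JJ < 4/\<tau>" using e by simp
qed

lemma th_JJ: "1/2 \<le> th JJ" "th JJ < 1"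
  using JJ_bounds tau0 unfolding th_def by (auto simp: field_simps)

lemma th_mono: "j \<le> j' \<Longrightarrow> th j \<le> th j'"
  unfolding th_def using tau0 by (simp add: power_increasing)

lemma U_up: assumes i: "i < k" and x: "x \<in> U i j" and xy: "x \<le> y" shows "y \<in> U i j"
proof -
  have xg: "-\<Delta>/2 < x" and c: "(1 + th j) * q i (x+\<Delta>) \<le> q i x" using x unfolding U_def by auto
  have yg: "-\<Delta>/2 < y" using xg xy by simp
  have "(1 + th j) * q i (y+\<Delta>) \<le> q i y"
  proof (cases "0 < q i (x+\<Delta>)")
    case True
    have "q i (x+\<Delta>) * ((1 + th j) * q i (y+\<Delta>)) = ((1 + th j) * q i (x+\<Delta>)) * q i (y+\<Delta>)" by simp
    also have "\<dots> \<le> q i x * q i (y+\<Delta>)" by (rule mult_right_mono[OF c q_nn[OF i]])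
    also have "\<dots> \<le> q i (x+\<Delta>) * q i y" by (rule q_tp2[OF i xy])
    finally show ?thesis using True by simp
  next
    case False
    have "q i (y+\<Delta>) \<le> q i (x+\<Delta>)" by (rule q_uni[OF i]) (use xg xy D0 in auto)
    then have "q i (y+\<Delta>) = 0" using False q_nn[OF i, of "y+\<Delta>"] by simp
    then show ?thesis using q_nn[OF i, of y] by simp
  qed
  then show ?thesis using yg unfolding U_def by simp
qed

lemma finite_R: "finite R" unfolding R_def by auto

lemma finite_F: "finite F" unfolding F_def using finite_R by auto

lemma F_up: assumes "K \<in> F" "x \<in> K" "x \<le> y" shows "y \<in> K"
proof -
  have "K = {x. -\<Delta>/2 < x} \<or> K = {x. 0<x} \<or> (\<exists>i j. i<k \<and> K = U i j) \<or> (\<exists>n. K = Pp n) \<or> (\<exists>n. K = Pm n)"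
    using assms(1) unfolding F_def by auto
  then show ?thesis
  proof (elim disjE exE conjE)
    fix n assume K: "K = Pp n"
    have "0 < y" "p y \<le> p x" using assms(2,3) K unfolding Pp_def by (auto intro!: p_uni)
    then show ?thesis using assms(2) K unfolding Pp_def by auto
  next
    fix n assume K: "K = Pm n"
    show ?thesis
    proof (cases "0 < y")
      case True then show ?thesis using K unfolding Pm_def by auto
    next
      case False
      then have "p x \<le> p y" using assms(3) by (intro p_uni) auto
      then show ?thesis using assms(2,3) K False unfolding Pm_def by auto
    qed
  qed (use assms U_up in auto)
qed

end


context mixsetup begin

lemma cell_refl: "x \<in> cell x" unfolding cell_def by simp

lemma cell_mem: "y \<in> cell x \<Longrightarrow> K \<in> F \<Longrightarrow> (y \<in> K \<longleftrightarrow> x \<in> K)"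
  unfolding cell_def by auto

lemma cell_eq: "y \<in> cell x \<Longrightarrow> cell y = cell x"
  unfolding cell_def by auto

lemma cell_disj: "cell x \<noteq> cell y \<Longrightarrow> cell x \<inter> cell y = {}"
  using cell_eq by blast

lemma cell_interval: "is_interval (cell x)"
  unfolding is_interval_1
proof (intro ballI allI impI)
  fix a b z assume a: "a \<in> cell x" and b: "b \<in> cell x" and z: "a \<le> z \<and> z \<le> b"
  show "z \<in> cell x" unfolding cell_def
  proof (intro CollectI ballI)
    fix K assume K: "K \<in> F"
    show "z \<in> K \<longleftrightarrow> x \<in> K"
    proof
      assume "z \<in> K"
      then have "b \<in> K" using F_up[OF K] z by blast
      then show "x \<in> K" using cell_mem[OF b K] by simp
    next
      assume "x \<in> K"
      then have "a \<in> K" using cell_mem[OF a K] by simp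
      then show "z \<in> K" using F_up[OF K] z by blast
    qed
  qed
qed

definition phi where "phi x = card {K\<in>F. x \<in> K}"

lemma phi_inj: assumes "phi x = phi y" shows "cell x = cell y"
proof -
  have *: "cell a = cell b" if ab: "a \<le> b" and e: "phi a = phi b" for a b
  proof -
    have sub: "{K\<in>F. a \<in> K} \<subseteq> {K\<in>F. b \<in> K}" using F_up ab by blast
    have "{K\<in>F. a \<in> K} = {K\<in>F. b \<in> K}"
    proof (rule ccontr)
      assume "{K\<in>F. a \<in> K} \<noteq> {K\<in>F. b \<in> K}"
      then have "{K\<in>F. a \<in> K} \<subset> {K\<in>F. b \<in> K}" using sub by blast
      then have "phi a < phi b" unfolding phi_def by (rule psubset_card_mono[rotated]) (use finite_F in auto)
      then show False using e by simp
    qed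
    then show ?thesis unfolding cell_def by blast
  qed
  show ?thesis
  proof (cases "x \<le> y")
    case True then show ?thesis using * assms by blast
  next
    case False then show ?thesis using *[of y x] assms by simp
  qed
qed

lemma phi_le: "phi x \<le> card F"
  unfolding phi_def by (rule card_mono[OF finite_F]) auto

lemma cells_card: "finite (range cell)" "card (range cell) \<le> card F + 1"
proof -
  define H where "H n = cell (SOME x. phi x = n)" for n
  have sub: "range cell \<subseteq> H ` {0..card F}"
  proof
    fix Q assume "Q \<in> range cell"
    then obtain x where Q: "Q = cell x" by auto
    have "phi (SOME y. phi y = phi x) = phi x" by (rule someI) simp
    then have "H (phi x) = Q" unfolding H_def Q by (rule phi_inj)
    then show "Q \<in> H ` {0..card F}" using phi_le[of x] by force
  qed
  show "finite (range cell)" using finite_subset[OF sub] by simp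
  have "card (range cell) \<le> card (H ` {0..card F})" by (rule card_mono[OF _ sub]) simp
  also have "\<dots> \<le> card {0..card F}" by (rule card_image_le) simp
  finally show "card (range cell) \<le> card F + 1" by simp
qed

lemma UF: "i < k \<Longrightarrow> j \<le> JJ \<Longrightarrow> U i j \<in> F" unfolding F_def by force

lemma lev_cell: assumes "y \<in> cell x" "i < k" shows "lev i y = lev i x"
proof -
  have "{th j | j. j \<le> JJ \<and> y \<in> U i j} = {th j | j. j \<le> JJ \<and> x \<in> U i j}"
    using cell_mem[OF assms(1) UF[OF assms(2)]] by blast
  then show ?thesis unfolding lev_def by simp
qed

lemma lev_fin: "finite (insert 0 {th j | j. j \<le> JJ \<and> x \<in> U i j})" by simp

lemma lev_nn: "0 \<le> lev i x" unfolding lev_def by (rule Max_ge[OF lev_fin]) simp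

lemma lev_ge: "j \<le> JJ \<Longrightarrow> x \<in> U i j \<Longrightarrow> th j \<le> lev i x"
  unfolding lev_def by (rule Max_ge[OF lev_fin]) blast

lemma lev_in: "lev i x = 0 \<or> (\<exists>j\<le>JJ. x \<in> U i j \<and> lev i x = th j)"
proof -
  have "lev i x \<in> insert 0 {th j | j. j \<le> JJ \<and> x \<in> U i j}"
    unfolding lev_def by (rule Max_in[OF lev_fin]) simp
  then show ?thesis by auto
qed

lemma lev_le1: "lev i x \<le> 1"
  using lev_in[of i x] th_mono th_JJ by force

lemma lev_cond: assumes i: "i < k" and x: "-\<Delta>/2 < x" shows "(1 + lev i x) * q i (x + \<Delta>) \<le> q i x"
  using lev_in[of i x]
proof
  assume "lev i x = 0" then show ?thesis using shift_le[OF i x] by simp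
next
  assume "\<exists>j\<le>JJ. x \<in> U i j \<and> lev i x = th j"
  then show ?thesis unfolding U_def by auto
qed

lemma lev_upper: assumes i: "i < k" and x: "-\<Delta>/2 < x"
  shows "q i x - q i (x + \<Delta>) \<le> 2 * lev i x * q i x + \<tau>/4 * q i x"
proof -
  have qn: "0 \<le> q i x" "0 \<le> q i (x+\<Delta>)" using q_nn[OF i] by auto
  have sl: "q i (x+\<Delta>) \<le> q i x" using shift_le[OF i x] .
  have ln: "0 \<le> lev i x" by (rule lev_nn)
  have tn: "0 \<le> \<tau>/4 * q i x" using tau0 qn by simp
  have ln2: "0 \<le> 2 * lev i x * q i x" using ln qn by simp
  have Ueq: "x \<in> U i j \<longleftrightarrow> (1 + th j) * q i (x+\<Delta>) \<le> q i x" for j using x unfolding U_def by simp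
  show ?thesis
  proof (cases "x \<in> U i 0")
    case False
    then have "q i x < (1 + \<tau>/4) * q i (x+\<Delta>)" using Ueq th_0 by auto
    then have "q i x - q i (x+\<Delta>) < \<tau>/4 * q i (x+\<Delta>)" by (simp add: algebra_simps)
    also have "\<dots> \<le> \<tau>/4 * q i x" using sl tau0 by simp
    finally show ?thesis using ln2 by linarith
  next
    case U0: True
    show ?thesis
    proof (cases "x \<in> U i JJ")
      case True
      then have "1/2 \<le> lev i x" using lev_ge[of JJ x i] th_JJ by simp
      then have "1 * q i x \<le> (2 * lev i x) * q i x" using qn by (intro mult_right_mono) auto
      then have "q i x \<le> 2 * lev i x * q i x" by simp
      then show ?thesis using tn qn(2) by linarith
    next
      case False
      obtain j where j: "j < JJ" "x \<in> U i j" "x \<notin> U i (Suc j)"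
        using discrete_step[of "\<lambda>j. x \<in> U i j" JJ] U0 False by auto
      have lj: "th j \<le> lev i x" using lev_ge[of j x i] j by simp
      have "q i x < (1 + 2 * th j) * q i (x+\<Delta>)" using j(3) Ueq th_Suc by (simp add: not_le)
      then have "q i x - q i (x+\<Delta>) < 2 * th j * q i (x+\<Delta>)" by (simp add: algebra_simps)
      also have "\<dots> \<le> 2 * lev i x * q i x"
        using lj sl qn th_nn[of j] by (intro mult_mono) auto
      finally show ?thesis using tn by linarith
    qed
  qed
qed

end


context mixsetup begin

lemma f_mono: assumes "\<forall>i<k. lev i z = lev i b" "\<bar>z\<bar> \<le> \<bar>b\<bar>" shows "f b \<le> f z"
  unfolding f_def
proof (rule sum_mono)
  fix i assume "i \<in> {..<k}"
  then have i: "i < k" by simp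
  show "lev i b * q i b \<le> lev i z * q i z"
    using assms(1) i q_uni[OF i assms(2)] lev_nn[of i z] by (simp add: mult_left_mono)
qed

lemma JC_interval: "is_interval (JC (cell x0))"
  unfolding is_interval_1
proof (intro ballI allI impI)
  fix a b z assume a: "a \<in> JC (cell x0)" and b: "b \<in> JC (cell x0)" and z: "a \<le> z \<and> z \<le> b"
  have ac: "a \<in> cell x0" and bc: "b \<in> cell x0" using a b unfolding JC_def by auto
  have zc: "z \<in> cell x0" using cell_interval[of x0] ac bc z unfolding is_interval_1 by blast
  have za: "-\<Delta>/2 < z" using a z unfolding JC_def by auto
  have levz: "lev i z = lev i x0" "lev i a = lev i x0" "lev i b = lev i x0" if "i < k" for i
    using lev_cell[OF zc that] lev_cell[OF ac that] lev_cell[OF bc that] by auto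
  have pz: "0 < p z"
  proof (cases "0 < z")
    case True
    then have "p b \<le> p z" using z by (intro p_uni) auto
    then show ?thesis using b unfolding JC_def by auto
  next
    case False
    then have "p a \<le> p z" using z by (intro p_uni) auto
    then show ?thesis using a unfolding JC_def by auto
  qed
  have fz: "\<tau>/16 * p y \<le> f z" if y: "y \<in> cell x0" for y
  proof (cases "0 < z")
    case True
    then have "f b \<le> f z" using z levz by (intro f_mono) auto
    then show ?thesis using b y unfolding JC_def by force
  next
    case False
    then have "f a \<le> f z" using z levz by (intro f_mono) auto
    then show ?thesis using a y unfolding JC_def by force
  qed
  show "z \<in> JC (cell x0)" unfolding JC_def using zc za pz fz by auto
qed

lemma per_term:
  fixes l a b :: real
  assumes l0: "0 \<le> l" and l1: "l \<le> 1" and bn: "0 \<le> b" and c: "(1 + l) * b \<le> a"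
  shows "l * a \<le> 2 * (a - b)"
proof -
  have "(2 - l) * ((1 + l) * b) \<le> (2 - l) * a" using c l1 by (intro mult_left_mono) auto
  moreover have "(2 - l) * ((1 + l) * b) = 2 * b + l * (1 - l) * b" by (simp add: algebra_simps)
  moreover have "0 \<le> l * (1 - l) * b" using l0 l1 bn by simp
  ultimately show ?thesis by (simp add: algebra_simps)
qed

lemma JC_ratio: assumes x: "x \<in> JC Q" shows "ereal (1/32 * \<tau>) \<le> ratio_t p \<Delta> x"
proof -
  have xg: "-\<Delta>/2 < x" and px: "0 < p x" and fx: "\<tau>/16 * p x \<le> f x" using x unfolding JC_def by auto
  have "f x \<le> (\<Sum>i<k. 2 * (q i x - q i (x + \<Delta>)))"
    unfolding f_def
  proof (rule sum_mono)
    fix i assume "i \<in> {..<k}" then have i: "i < k" by simp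
    show "lev i x * q i x \<le> 2 * (q i x - q i (x + \<Delta>))"
      by (rule per_term[OF lev_nn lev_le1 q_nn[OF i] lev_cond[OF i xg]])
  qed
  also have "\<dots> = 2 * (p x - p (x + \<Delta>))" unfolding p_def by (simp add: sum_distrib_left sum_subtractf)
  finally have "\<tau>/32 * p x \<le> p x - p (x + \<Delta>)" using fx by simp
  then have pd: "p (x + \<Delta>) \<le> (1 - \<tau>/32) * p x" by (simp add: algebra_simps)
  have "(1 + \<tau>/32) * p (x + \<Delta>) \<le> (1 + \<tau>/32) * ((1 - \<tau>/32) * p x)"
    using pd tau0 by (intro mult_left_mono) auto
  also have "\<dots> = p x - (\<tau>/32)^2 * p x" by (simp add: algebra_simps power2_eq_square)
  also have "\<dots> \<le> p x" using p_nn[of x] by simp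
  finally have "(1 + 1/32 * \<tau>) * p (x + \<Delta>) \<le> p x" by simp
  then show ?thesis unfolding ratio_t_def using ratio_ge[OF p_nn p_nn, of "1/32 * \<tau>"] tau0 px by simp
qed

lemma PpF: "n \<in> R \<Longrightarrow> Pp n \<in> F" and PmF: "n \<in> R \<Longrightarrow> Pm n \<in> F" and posF: "{x. 0 < x} \<in> F"
  unfolding F_def by auto

lemma good_in: assumes t: "ereal \<tau> \<le> ratio_t p \<Delta> x0" and nb: "x0 \<notin> Bad"
  shows "x0 \<in> JC (cell x0)"
proof -
  have px: "0 < p x0" and c: "(1 + \<tau>) * p (x0 + \<Delta>) \<le> p x0"
    using t unfolding ratio_t_def using ratio_ge[OF p_nn p_nn tau0] by auto
  have xg: "-\<Delta>/2 < x0"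
  proof (rule ccontr)
    assume "\<not> -\<Delta>/2 < x0"
    then have "p x0 \<le> p (x0 + \<Delta>)" by (intro shift_ge_p) simp
    then have "(1 + \<tau>) * p x0 \<le> (1 + \<tau>) * p (x0 + \<Delta>)" using tau0 by (intro mult_left_mono) auto
    then have "(1 + \<tau>) * p x0 \<le> p x0" using c by linarith
    then have "\<tau> * p x0 \<le> 0" by (simp add: algebra_simps)
    then show False using mult_pos_pos[OF tau0 px] by linarith
  qed
  have "p x0 - p (x0 + \<Delta>) = (\<Sum>i<k. q i x0 - q i (x0 + \<Delta>))" unfolding p_def by (simp add: sum_subtractf)
  also have "\<dots> \<le> (\<Sum>i<k. 2 * lev i x0 * q i x0 + \<tau>/4 * q i x0)"
    by (rule sum_mono) (use lev_upper xg in auto)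
  also have "\<dots> = 2 * f x0 + \<tau>/4 * p x0" unfolding f_def p_def
    by (simp add: sum.distrib sum_distrib_left mult.assoc)
  finally have up: "p x0 - p (x0 + \<Delta>) \<le> 2 * f x0 + \<tau>/4 * p x0" .
  have "\<tau> * p x0 \<le> (1 + \<tau>) * (p x0 - p (x0 + \<Delta>))" using c by (simp add: algebra_simps)
  also have "\<dots> \<le> 2 * (p x0 - p (x0 + \<Delta>))"
  proof -
    have "0 \<le> \<tau> * p (x0 + \<Delta>)" using tau0 p_nn[of "x0+\<Delta>"] by simp
    then have "0 \<le> p x0 - p (x0 + \<Delta>)" using c by (simp add: algebra_simps)
    then show ?thesis using t1 by (intro mult_right_mono) auto
  qed
  finally have "\<tau> * p x0 \<le> 2 * (p x0 - p (x0 + \<Delta>))" .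
  then have fx: "\<tau>/8 * p x0 \<le> f x0" using up by simp
  obtain i where i: "i < k" and i1: "p x0 \<le> 2 * real k * q i x0" and i2: "\<eta> * q i 0 \<le> q i x0"
    using nb unfolding Bad_def by auto
  have eta0: "0 < \<eta>" unfolding \<eta>_def using d0 by simp
  have qx: "0 < q i x0"
  proof (rule ccontr)
    assume "\<not> 0 < q i x0"
    then have "q i x0 = 0" using q_nn[OF i, of x0] by simp
    then show False using i1 px by simp
  qed
  have q0: "0 < q i 0" using qx q_max[OF i, of x0] by simp
  define n where "n = \<lceil>log 2 (p x0)\<rceil>"
  have nR: "n \<in> R" unfolding R_def
  proof (rule UN_I[of i])
    show "i \<in> {i. i < k \<and> 0 < q i 0}" using i q0 by simp
    have "log 2 (\<eta> * q i 0) \<le> log 2 (p x0)"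
      using i2 q_le_p[OF i, of x0] eta0 q0 px by simp
    then have A: "\<lceil>log 2 (\<eta> * q i 0)\<rceil> \<le> n" unfolding n_def by (rule ceiling_mono)
    have "2 * real k * q i x0 \<le> 2 * real k * q i 0" by (intro mult_left_mono q_max[OF i]) simp
    then have "p x0 \<le> 2 * real k * q i 0" using i1 by linarith
    then have "log 2 (p x0) \<le> log 2 (2 * real k * q i 0)" using px by simp
    then have B: "n \<le> \<lceil>log 2 (2 * real k * q i 0)\<rceil>" unfolding n_def by (rule ceiling_mono)
    show "n \<in> {\<lceil>log 2 (\<eta> * q i 0)\<rceil>..\<lceil>log 2 (2 * real k * q i 0)\<rceil>}" using A B by simp
  qed
  have pn1: "p x0 \<le> 2 powr real_of_int n"
  proof -
    have "p x0 = 2 powr (log 2 (p x0))" using px by simp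
    also have "\<dots> \<le> 2 powr real_of_int n" unfolding n_def by (rule powr_mono) auto
    finally show ?thesis .
  qed
  have pn2: "2 powr real_of_int n < 2 * p x0"
  proof -
    have "2 powr real_of_int n < 2 powr (log 2 (p x0) + 1)"
      unfolding n_def by (rule powr_less_mono) linarith+
    also have "\<dots> = 2 * p x0" using px by (simp add: powr_add)
    finally show ?thesis .
  qed
  have py: "p y \<le> 2 * p x0" if y: "y \<in> cell x0" for y
  proof -
    have "p y \<le> 2 powr real_of_int n"
    proof (cases "0 < x0")
      case True
      then have "x0 \<in> Pp n" using pn1 unfolding Pp_def by simp
      then have "y \<in> Pp n" using cell_mem[OF y PpF[OF nR]] by simp
      then show ?thesis unfolding Pp_def by simp
    next
      case False
      then have "x0 \<notin> Pm n" using pn1 unfolding Pm_def by simp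
      then have "y \<notin> Pm n" using cell_mem[OF y PmF[OF nR]] by simp
      then show ?thesis unfolding Pm_def by simp
    qed
    then show ?thesis using pn2 by simp
  qed
  have "\<tau>/16 * p y \<le> f x0" if "y \<in> cell x0" for y
  proof -
    have "\<tau>/16 * p y \<le> \<tau>/16 * (2 * p x0)" using py[OF that] tau0 by (intro mult_left_mono) auto
    then show ?thesis using fx by simp
  qed
  then show ?thesis unfolding JC_def using cell_refl xg px by auto
qed

end


lemma lt_sets: "f \<in> borel_measurable borel \<Longrightarrow> g \<in> borel_measurable borel \<Longrightarrow> {x. f x < (g x::real)} \<in> sets borel"
  using borel_measurable_less[of f borel g] by simp

context mixsetup begin

lemma ps_meas: "i < k \<Longrightarrow> ps i \<in> borel_measurable borel" using pd unfolding is_density_def by auto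

lemma q_meas: "i < k \<Longrightarrow> q i \<in> borel_measurable borel"
  unfolding q_def[abs_def] using ps_meas by (intro borel_measurable_times) auto

lemma p_meas: "p \<in> borel_measurable borel"
  unfolding p_def[abs_def] by (rule borel_measurable_sum) (simp add: q_meas)

lemma int_ps: "i < k \<Longrightarrow> (\<integral>\<^sup>+x. ennreal (ps i x) \<partial>lborel) = 1"
  using nn_integral_eq_integral[of lborel "ps i"] pd unfolding is_density_def by auto

lemma int_p: "(\<integral>\<^sup>+x. ennreal (p x) \<partial>lborel) = 1"
proof -
  have e: "ennreal (p x) = (\<Sum>i<k. ennreal (w i) * ennreal (ps i x))" for x
  proof -
    have "(\<Sum>i<k. ennreal (w i) * ennreal (ps i x)) = (\<Sum>i<k. ennreal (q i x))"
      by (rule sum.cong) (use wn lc_nonneg[OF lcps] in \<open>auto simp: q_def ennreal_mult\<close>)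
    also have "\<dots> = ennreal (p x)" unfolding p_def by (rule sum_ennreal) (simp add: q_nn)
    finally show ?thesis by simp
  qed
  have "(\<integral>\<^sup>+x. ennreal (p x) \<partial>lborel) = (\<Sum>i<k. \<integral>\<^sup>+x. ennreal (w i) * ennreal (ps i x) \<partial>lborel)"
    unfolding e by (rule nn_integral_sum) (use ps_meas in auto)
  also have "\<dots> = (\<Sum>i<k. ennreal (w i))"
    by (rule sum.cong) (use ps_meas int_ps in \<open>auto simp: nn_integral_cmult\<close>)
  also have "\<dots> = 1" using ws wn by (subst sum_ennreal) auto
  finally show ?thesis .
qed

abbreviation "MM \<equiv> density lborel (\<lambda>x. ennreal (p x))"

lemma MM_sets: "sets MM = sets borel" by simp

lemma MM_fin: "A \<in> sets borel \<Longrightarrow> A \<in> fmeasurable MM"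
proof -
  assume A: "A \<in> sets borel"
  have "emeasure MM A = (\<integral>\<^sup>+x. ennreal (p x) * indicator A x \<partial>lborel)"
    using A p_meas by (subst emeasure_density) auto
  also have "\<dots> \<le> (\<integral>\<^sup>+x. ennreal (p x) \<partial>lborel)"
    by (rule nn_integral_mono) (auto simp: indicator_def)
  finally have "emeasure MM A < \<infinity>" using int_p by (simp add: order_le_less_trans)
  then show ?thesis using A by (intro fmeasurableI) auto
qed

lemma measure_cover:
  assumes S: "S \<subseteq> A \<union> B" and A: "A \<in> sets borel" and B: "B \<in> sets borel"
  shows "measure MM S \<le> measure MM A + measure MM B"
proof (cases "S \<in> sets MM")
  case True
  have "measure MM S \<le> measure MM (A \<union> B)"
    by (rule measure_mono_fmeasurable[OF S True]) (use MM_fin A B in auto)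
  also have "\<dots> \<le> measure MM A + measure MM B" by (rule measure_Un_le) (use A B in auto)
  finally show ?thesis .
next
  case False
  then show ?thesis by (simp add: measure_notin_sets)
qed

lemma Bad_sets: "Bad \<in> sets borel"
proof -
  have "Bad = UNIV - (\<Union>i\<in>{..<k}. (UNIV - {x. 2 * real k * q i x < p x}) \<inter> (UNIV - {x. q i x < \<eta> * q i 0}))"
    unfolding Bad_def by (auto simp: not_less)
  also have "\<dots> \<in> sets borel"
    using q_meas p_meas
    by (intro sets.Diff sets.finite_UN sets.Int lt_sets sets.top) (auto intro!: borel_measurable_times)
  finally show ?thesis .
qed

lemma Bad_pw: assumes x: "x \<in> Bad"
  shows "p x \<le> (\<Sum>i<k. 2 * w i * (ps i x * indicator {x. ps i x < \<eta> * ps i 0} x))"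
proof -
  have a: "q i x \<le> q i x * indicator {x. q i x < \<eta> * q i 0} x + p x / (2 * real k)" if i: "i < k" for i
  proof (cases "q i x < \<eta> * q i 0")
    case True then show ?thesis using p_nn[of x] by simp
  next
    case False
    then have "\<not> p x \<le> 2 * real k * q i x" using x i unfolding Bad_def by (auto simp: not_less)
    then have "q i x < p x / (2 * real k)" using k1 by (simp add: field_simps)
    then show ?thesis using False by simp
  qed
  have "p x = (\<Sum>i<k. q i x)" by (simp add: p_def)
  also have "\<dots> \<le> (\<Sum>i<k. q i x * indicator {x. q i x < \<eta> * q i 0} x + p x / (2 * real k))"
    by (rule sum_mono) (use a in auto)
  also have "\<dots> = (\<Sum>i<k. q i x * indicator {x. q i x < \<eta> * q i 0} x) + p x / 2"
    using k1 by (simp add: sum.distrib)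
  finally have b: "p x \<le> 2 * (\<Sum>i<k. q i x * indicator {x. q i x < \<eta> * q i 0} x)" by simp
  have c: "q i x * indicator {x. q i x < \<eta> * q i 0} x \<le> w i * (ps i x * indicator {x. ps i x < \<eta> * ps i 0} x)"
    if i: "i < k" for i
  proof (cases "w i = 0")
    case True then show ?thesis by (simp add: q_def)
  next
    case False
    then have wp: "0 < w i" using wn i by (simp add: less_le)
    have e: "\<eta> * (w i * ps i 0) = w i * (\<eta> * ps i 0)" by (simp only: mult.left_commute)
    have "q i x < \<eta> * q i 0 \<longleftrightarrow> ps i x < \<eta> * ps i 0"
      unfolding q_def e by (rule mult_less_cancel_left_pos[OF wp])
    then show ?thesis by (simp add: q_def indicator_def)
  qed
  have "2 * (\<Sum>i<k. q i x * indicator {x. q i x < \<eta> * q i 0} x)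
      \<le> 2 * (\<Sum>i<k. w i * (ps i x * indicator {x. ps i x < \<eta> * ps i 0} x))"
    by (intro mult_left_mono sum_mono) (use c in auto)
  then show ?thesis using b by (simp add: sum_distrib_left mult.assoc)
qed

lemma Bad_measure: "measure MM Bad \<le> 4 * \<delta>"
proof -
  define g where "g i x = ps i x * indicator {x. ps i x < \<eta> * ps i 0} x" for i x
  have eta0: "0 < \<eta>" unfolding \<eta>_def using d0 by simp
  have gn: "i < k \<Longrightarrow> 0 \<le> g i x" for i x unfolding g_def using lc_nonneg[OF lcps] by simp
  have gm: "i < k \<Longrightarrow> (\<lambda>x. ennreal (g i x)) \<in> borel_measurable borel" for i
  proof -
    assume i: "i < k"
    have "{x. ps i x < \<eta> * ps i 0} \<in> sets borel" using ps_meas[OF i] by (intro lt_sets) auto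
    then show ?thesis unfolding g_def using ps_meas[OF i]
      by (intro measurable_compose[OF _ measurable_ennreal] borel_measurable_times borel_measurable_indicator) auto
  qed
  have "emeasure MM Bad = (\<integral>\<^sup>+x. ennreal (p x) * indicator Bad x \<partial>lborel)"
    using Bad_sets p_meas by (subst emeasure_density) auto
  also have "\<dots> \<le> (\<integral>\<^sup>+x. (\<Sum>i<k. ennreal (2 * w i) * ennreal (g i x)) \<partial>lborel)"
  proof (rule nn_integral_mono)
    fix x
    have "(\<Sum>i<k. ennreal (2 * w i) * ennreal (g i x)) = (\<Sum>i<k. ennreal (2 * w i * g i x))"
      by (rule sum.cong) (use wn gn in \<open>auto simp: ennreal_mult\<close>)
    also have "\<dots> = ennreal (\<Sum>i<k. 2 * w i * g i x)" by (rule sum_ennreal) (use wn gn in auto)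
    finally have e: "(\<Sum>i<k. ennreal (2 * w i) * ennreal (g i x)) = ennreal (\<Sum>i<k. 2 * w i * g i x)" .
    show "ennreal (p x) * indicator Bad x \<le> (\<Sum>i<k. ennreal (2 * w i) * ennreal (g i x))"
    proof (cases "x \<in> Bad")
      case True
      then show ?thesis unfolding e using Bad_pw[OF True] by (simp add: g_def mult.assoc ennreal_leI)
    next
      case False then show ?thesis by simp
    qed
  qed
  also have "\<dots> = (\<Sum>i<k. ennreal (2 * w i) * (\<integral>\<^sup>+x. ennreal (g i x) \<partial>lborel))"
    by (subst nn_integral_sum) (use gm in \<open>auto simp: nn_integral_cmult\<close>)
  also have "\<dots> \<le> (\<Sum>i<k. ennreal (2 * w i) * ennreal (2 * sqrt \<eta>))"
  proof (rule sum_mono)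
    fix i assume "i \<in> {..<k}" then have i: "i < k" by simp
    have "(\<integral>\<^sup>+x. ennreal (g i x) \<partial>lborel) \<le> ennreal (2 * sqrt \<eta>)"
      unfolding g_def using tail_bound[of "ps i" \<eta>] pd i eta0 by auto
    then show "ennreal (2 * w i) * (\<integral>\<^sup>+x. ennreal (g i x) \<partial>lborel) \<le> ennreal (2 * w i) * ennreal (2 * sqrt \<eta>)"
      by (rule mult_left_mono) simp
  qed
  also have "\<dots> = (\<Sum>i<k. ennreal (2 * w i * (2 * sqrt \<eta>)))"
    by (rule sum.cong) (use wn eta0 in \<open>auto simp: ennreal_mult[symmetric]\<close>)
  also have "\<dots> = ennreal (\<Sum>i<k. 2 * w i * (2 * sqrt \<eta>))"
    by (rule sum_ennreal) (use wn eta0 in auto)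
  also have "(\<Sum>i<k. 2 * w i * (2 * sqrt \<eta>)) = 4 * \<delta>"
  proof -
    have "sqrt \<eta> = \<delta>" unfolding \<eta>_def using d0 by simp
    then have "(\<Sum>i<k. 2 * w i * (2 * sqrt \<eta>)) = 4 * \<delta> * (\<Sum>i<k. w i)"
      by (simp add: sum_distrib_left sum_distrib_right mult.assoc mult.commute mult.left_commute)
    then show ?thesis using ws by simp
  qed
  finally have "emeasure MM Bad \<le> ennreal (4 * \<delta>)" .
  then show ?thesis unfolding measure_def using d0 by (simp add: enn2real_leI)
qed

end


context mixsetup begin

lemma eta_pos: "0 < \<eta>" unfolding \<eta>_def using d0 by simp

lemma card_R: "real (card R) \<le> real k * (log 2 (2 * real k) - log 2 \<eta> + 2)"
proof -
  define I where "I = {i. i<k \<and> 0 < q i 0}"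
  define Lb where "Lb = log 2 (2 * real k) - log 2 \<eta> + 2"
  have k0: "0 < real k" using k1 by simp
  have Lb0: "0 \<le> Lb"
  proof -
    have "0 \<le> log 2 (2 * real k)" using k1 by simp
    moreover have "log 2 \<eta> \<le> 0" unfolding \<eta>_def using d0 d1
      by (simp add: power_le_one)
    ultimately show ?thesis unfolding Lb_def by simp
  qed
  have finI: "finite I" unfolding I_def by simp
  have each: "real (card {\<lceil>log 2 (\<eta> * q i 0)\<rceil> .. \<lceil>log 2 (2 * real k * q i 0)\<rceil>}) \<le> Lb" if i: "i \<in> I" for i
  proof -
    have q0: "0 < q i 0" using i unfolding I_def by simp
    have e1: "log 2 (2 * real k * q i 0) = log 2 (2 * real k) + log 2 (q i 0)"
      using q0 k0 by (simp add: log_mult)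
    have e2: "log 2 (\<eta> * q i 0) = log 2 \<eta> + log 2 (q i 0)"
      using q0 eta_pos by (simp add: log_mult)
    have "real_of_int (\<lceil>log 2 (2 * real k * q i 0)\<rceil> + 1 - \<lceil>log 2 (\<eta> * q i 0)\<rceil>) \<le> Lb"
      unfolding Lb_def using e1 e2
      by (smt (verit, best) ceiling_correct le_of_int_ceiling of_int_add of_int_diff of_int_1)
    then show ?thesis using Lb0 by (simp add: card_atLeastAtMost_int)
  qed
  have "card R \<le> (\<Sum>i\<in>I. card {\<lceil>log 2 (\<eta> * q i 0)\<rceil> .. \<lceil>log 2 (2 * real k * q i 0)\<rceil>})"
    unfolding R_def I_def[symmetric] by (rule card_UN_le[OF finI])
  then have "real (card R) \<le> real (\<Sum>i\<in>I. card {\<lceil>log 2 (\<eta> * q i 0)\<rceil> .. \<lceil>log 2 (2 * real k * q i 0)\<rceil>})"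
    by (rule of_nat_mono)
  also have "\<dots> = (\<Sum>i\<in>I. real (card {\<lceil>log 2 (\<eta> * q i 0)\<rceil> .. \<lceil>log 2 (2 * real k * q i 0)\<rceil>}))"
    by (rule of_nat_sum)
  also have "\<dots> \<le> (\<Sum>i\<in>I. Lb)" by (rule sum_mono) (rule each)
  also have "\<dots> = real (card I) * Lb" by simp
  also have "\<dots> \<le> real k * Lb"
  proof -
    have "I \<subseteq> {..<k}" unfolding I_def by auto
    then have "card I \<le> k" using card_mono[of "{..<k}" I] by simp
    then show ?thesis using Lb0 by (intro mult_right_mono) auto
  qed
  finally show ?thesis unfolding Lb_def .
qed

lemma card2: "card {a, b} \<le> 2" by (cases "a = b") auto

lemma card_F: "card F \<le> 2 + k * (JJ + 1) + 2 * card R"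
proof -
  define S1 where "S1 = {{x. -\<Delta>/2 < x}, {x::real. 0 < x}}"
  define S2 where "S2 = (\<lambda>(i,j). U i j) ` ({..<k} \<times> {..JJ})"
  have FF: "F = S1 \<union> S2 \<union> Pp ` R \<union> Pm ` R" unfolding F_def S1_def S2_def by simp
  have c1: "card S1 \<le> 2" unfolding S1_def by (rule card2)
  have c2: "card S2 \<le> k * (JJ + 1)"
    unfolding S2_def using card_image_le[of "{..<k} \<times> {..JJ}" "\<lambda>(i,j). U i j"] by (simp add: card_cartesian_product)
  have c3: "card (Pp ` R) \<le> card R" "card (Pm ` R) \<le> card R" using finite_R by (auto intro: card_image_le)
  have "card F \<le> card (S1 \<union> S2 \<union> Pp ` R) + card (Pm ` R)"
    unfolding FF by (rule card_Un_le)
  moreover have "card (S1 \<union> S2 \<union> Pp ` R) \<le> card (S1 \<union> S2) + card (Pp ` R)" by (rule card_Un_le)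
  moreover have "card (S1 \<union> S2) \<le> card S1 + card S2" by (rule card_Un_le)
  ultimately show ?thesis using c1 c2 c3 by linarith
qed

lemma count_bound: "real (card (range cell)) \<le> 20 * real k * ln (1 / (\<delta> * \<tau>min))"
proof -
  define A where "A = log 2 (1/\<tau>min)"
  define B where "B = log 2 (1/\<delta>)"
  have k0: "1 \<le> real k" using k1 by simp
  have tmh: "\<tau>min \<le> 1/2" and tmk: "\<tau>min \<le> 1 / real k" using tm1 by auto
  have dh: "\<delta> \<le> 1/2" using d1 by auto
  have A1: "1 \<le> A" unfolding A_def using tm0 tmh by (simp add: le_log_iff field_simps)
  have B1: "1 \<le> B" unfolding B_def using d0 dh by (simp add: le_log_iff field_simps)
  have l2t: "log 2 (2/\<tau>min) = 1 + A" unfolding A_def using tm0 by (simp add: log_divide)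
  have JJb: "real JJ \<le> 2 + A"
  proof -
    have "log 2 (2/\<tau>) \<le> log 2 (2/\<tau>min)" using tm0 t0 by (simp add: frac_le)
    moreover have "0 \<le> log 2 (2/\<tau>)" using tau0 t1 by simp
    ultimately have "real JJ \<le> log 2 (2/\<tau>min) + 1" unfolding JJ_def by linarith
    then show ?thesis using l2t by simp
  qed
  have l2k: "log 2 (2 * real k) \<le> 1 + A"
  proof -
    have "2 * real k \<le> 2 / \<tau>min" using tmk tm0 k0 by (simp add: field_simps)
    then have "log 2 (2 * real k) \<le> log 2 (2/\<tau>min)" using k0 tm0 by simp
    then show ?thesis using l2t by simp
  qed
  have leta: "log 2 \<eta> = - 2 * B" unfolding \<eta>_def B_def using d0 by (simp add: log_nat_power log_divide)
  have lnl: "ln (1 / (\<delta> * \<tau>min)) = ln 2 * (A + B)"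
  proof -
    have "ln (1 / (\<delta> * \<tau>min)) = ln (1/\<delta>) + ln (1/\<tau>min)" using d0 tm0 by (simp add: ln_div ln_mult)
    then show ?thesis unfolding A_def B_def log_def by (simp add: algebra_simps)
  qed
  have "real (card (range cell)) \<le> real (card F) + 1" using cells_card(2) by simp
  also have "\<dots> \<le> 3 + real k * (real JJ + 1) + 2 * real (card R)"
  proof -
    have "real (card F) \<le> real (2 + k * (JJ + 1) + 2 * card R)" using card_F by (simp only: of_nat_le_iff)
    then show ?thesis by (simp add: algebra_simps)
  qed
  also have "\<dots> \<le> 3 + real k * (A + 3) + 2 * (real k * (1 + A + 2 * B + 2))"
  proof -
    have "real k * (real JJ + 1) \<le> real k * (A + 3)" using JJb k0 by (intro mult_left_mono) auto
    moreover have "real (card R) \<le> real k * (1 + A + 2 * B + 2)"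
    proof -
      have "log 2 (2 * real k) - log 2 \<eta> + 2 \<le> 1 + A + 2 * B + 2" using l2k leta by simp
      then have "real k * (log 2 (2 * real k) - log 2 \<eta> + 2) \<le> real k * (1 + A + 2 * B + 2)"
        using k0 by (intro mult_left_mono) auto
      then show ?thesis using card_R by linarith
    qed
    ultimately show ?thesis by linarith
  qed
  also have "\<dots> \<le> real k * (12 + 4 * A + 4 * B)"
  proof -
    have e: "3 + real k * (A + 3) + 2 * (real k * (1 + A + 2 * B + 2)) = 3 + real k * (9 + 3 * A + 4 * B)"
      by (simp add: algebra_simps)
    have "0 \<le> real k * A" using k0 A1 by simp
    then have "3 + real k * (9 + 3 * A + 4 * B) \<le> real k * (12 + 4 * A + 4 * B)"
      using k0 by (simp add: algebra_simps)
    then show ?thesis using e by simp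
  qed
  also have "\<dots> \<le> real k * (20 * ln 2 * (A + B))"
  proof -
    have "(40/3) * (A + B) \<le> 20 * ln 2 * (A + B)" using ln2_ge_two_thirds A1 B1
      by (intro mult_right_mono) auto
    moreover have "(40/3) * (A + B) = (40/3) * A + (40/3) * B" by (simp add: algebra_simps)
    ultimately have "12 + 4 * A + 4 * B \<le> 20 * ln 2 * (A + B)" using A1 B1 by linarith
    then show ?thesis using k0 by (intro mult_left_mono) auto
  qed
  also have "\<dots> = 20 * real k * ln (1 / (\<delta> * \<tau>min))" using lnl by simp
  finally show ?thesis .
qed

end


context mixsetup begin

lemma p_eq: "p = (\<lambda>x. \<Sum>i<k. w i * ps i x)" unfolding p_def[abs_def] q_def by simp

lemma main_loc:
  "\<exists>(m::nat) (J::nat \<Rightarrow> real set).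
          real m \<le> 20 * real k * ln (1 / (\<delta> * \<tau>min)) \<and>
          (\<forall>j<m. is_interval (J j)) \<and>
          (\<forall>i<m. \<forall>j<m. i \<noteq> j \<longrightarrow> J i \<inter> J j = {}) \<and>
          (\<forall>x \<in> (\<Union>j<m. J j). ratio_t p \<Delta> x \<ge> ereal (1/32 * \<tau>)) \<and>
          prob_dens p (\<Union>j<m. J j) \<ge>
            1 * prob_dens p {x. ratio_t p \<Delta> x \<ge> ereal \<tau>} - 1 * \<delta> * real k / \<tau>min\<^sup>2"
proof -
  define m where "m = card (range cell)"
  obtain h where h: "bij_betw h {0..<m} (range cell)"
    unfolding m_def using ex_bij_betw_nat_finite[OF cells_card(1)] by blast
  define J where "J j = JC (h j)" for j
  have hc: "\<exists>x. h j = cell x" if j: "j < m" for j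
  proof -
    have "h j \<in> range cell" using bij_betwE[OF h] j by simp
    then show ?thesis by blast
  qed
  have int: "\<forall>j<m. is_interval (J j)"
  proof (intro allI impI)
    fix j assume "j < m"
    then obtain x where "h j = cell x" using hc by blast
    then show "is_interval (J j)" unfolding J_def using JC_interval by simp
  qed
  have disj: "\<forall>i<m. \<forall>j<m. i \<noteq> j \<longrightarrow> J i \<inter> J j = {}"
  proof (intro allI impI)
    fix i j assume i: "i < m" and j: "j < m" and ij: "i \<noteq> j"
    have "h i \<noteq> h j" using h i j ij unfolding bij_betw_def inj_on_def by auto
    moreover obtain a where "h i = cell a" using hc[OF i] by (elim exE)
    moreover obtain b where "h j = cell b" using hc[OF j] by (elim exE)
    ultimately have "h i \<inter> h j = {}" using cell_disj by simp
    then show "J i \<inter> J j = {}" unfolding J_def JC_def by auto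
  qed
  have rat: "\<forall>x \<in> (\<Union>j<m. J j). ratio_t p \<Delta> x \<ge> ereal (1/32 * \<tau>)"
    unfolding J_def using JC_ratio by blast
  have cover: "{x. ratio_t p \<Delta> x \<ge> ereal \<tau>} \<subseteq> (\<Union>j<m. J j) \<union> Bad"
  proof
    fix x assume x: "x \<in> {x. ratio_t p \<Delta> x \<ge> ereal \<tau>}"
    show "x \<in> (\<Union>j<m. J j) \<union> Bad"
    proof (cases "x \<in> Bad")
      case False
      have xin: "x \<in> JC (cell x)" using good_in x False by simp
      have "cell x \<in> h ` {0..<m}" using h unfolding bij_betw_def by auto
      then obtain j where j: "j < m" "h j = cell x" by auto
      then have "x \<in> J j" using xin unfolding J_def by simp
      then show ?thesis using j(1) by blast
    qed simp
  qed
  have Jm: "(\<Union>j<m. J j) \<in> sets borel"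
    using int by (intro sets.finite_UN) (auto intro: real_interval_borel_measurable)
  have "prob_dens p {x. ratio_t p \<Delta> x \<ge> ereal \<tau>} \<le> prob_dens p (\<Union>j<m. J j) + prob_dens p Bad"
    unfolding prob_dens_def by (rule measure_cover[OF cover Jm Bad_sets])
  moreover have "prob_dens p Bad \<le> 4 * \<delta>" unfolding prob_dens_def by (rule Bad_measure)
  moreover have "4 * \<delta> \<le> \<delta> * real k / \<tau>min\<^sup>2"
  proof -
    have "\<tau>min\<^sup>2 \<le> (1/2)^2" using tm0 tm1 by (intro power_mono) auto
    then have "4 * \<tau>min\<^sup>2 \<le> 1" by (simp add: power2_eq_square)
    moreover have "1 \<le> real k" using k1 by simp
    ultimately have "4 * \<tau>min\<^sup>2 \<le> real k" by linarith
    then have "\<delta> * (4 * \<tau>min\<^sup>2) \<le> \<delta> * real k" using d0 by (intro mult_left_mono) auto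
    then have "4 * \<delta> * \<tau>min\<^sup>2 \<le> \<delta> * real k" by (simp add: algebra_simps)
    then show ?thesis using tm0 by (simp add: field_simps)
  qed
  ultimately have meas: "prob_dens p (\<Union>j<m. J j) \<ge> 1 * prob_dens p {x. ratio_t p \<Delta> x \<ge> ereal \<tau>} - 1 * \<delta> * real k / \<tau>min\<^sup>2"
    by simp
  have "real m \<le> 20 * real k * ln (1 / (\<delta> * \<tau>min))" unfolding m_def by (rule count_bound)
  then show ?thesis using int disj rat meas by blast
qed

end

lemma interval_neg: "is_interval (S::real set) \<Longrightarrow> is_interval (uminus ` S)"
  unfolding is_interval_1
proof (intro ballI allI impI)
  fix a b z assume S: "\<forall>a\<in>S. \<forall>b\<in>S. \<forall>x. a \<le> x \<and> x \<le> b \<longrightarrow> x \<in> S"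
    and a: "a \<in> uminus ` S" and b: "b \<in> uminus ` S" and z: "a \<le> z \<and> z \<le> b"
  have "-b \<in> S" "-a \<in> S" using a b by auto
  moreover have "-b \<le> -z \<and> -z \<le> -a" using z by simp
  ultimately have "-z \<in> S" using S[rule_format, of "-b" "-a" "-z"] by blast
  then show "z \<in> uminus ` S" by (metis image_eqI minus_minus)
qed



theorem mainTheorem1:
  "\<exists>C1 C2 C3 C4 :: real. C1 > 0 \<and> C2 > 0 \<and> C3 > 0 \<and> C4 > 0 \<and>
    (\<forall>(k::nat) (w::nat \<Rightarrow> real) (ps::nat \<Rightarrow> real \<Rightarrow> real) (\<Delta>::real)
       (\<tau>min::real) (\<delta>::real) (\<tau>::real).
       k \<ge> 1 \<and> (\<forall>i<k. w i \<ge> 0) \<and> (\<Sum>i<k. w i) = 1 \<and>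
       (\<forall>i<k. is_density (ps i) \<and> log_concave (ps i) \<and> symmetric_fun (ps i)) \<and>
       0 < \<tau>min \<and> \<tau>min \<le> min (1 / real k) (1/2) \<and>
       0 < \<delta> \<and> \<delta> \<le> min (\<tau>min\<^sup>2 / real k) (1/2) \<and>
       \<tau>min \<le> \<tau> \<and> \<tau> \<le> 1
       \<longrightarrow>
       (let p = (\<lambda>x. \<Sum>i<k. w i * ps i x) in
        \<exists>(m::nat) (J::nat \<Rightarrow> real set).
          real m \<le> C1 * real k * ln (1 / (\<delta> * \<tau>min)) \<and>
          (\<forall>j<m. is_interval (J j)) \<and>
          (\<forall>i<m. \<forall>j<m. i \<noteq> j \<longrightarrow> J i \<inter> J j = {}) \<and>
          (\<forall>x \<in> (\<Union>j<m. J j). ratio_t p \<Delta> x \<ge> ereal (C2 * \<tau>)) \<and>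
          prob_dens p (\<Union>j<m. J j) \<ge>
            C3 * prob_dens p {x. ratio_t p \<Delta> x \<ge> ereal \<tau>} - C4 * \<delta> * real k / \<tau>min\<^sup>2))"
proof -
  have key: "\<exists>(m::nat) (J::nat \<Rightarrow> real set).
          real m \<le> 20 * real k * ln (1 / (\<delta> * \<tau>min)) \<and>
          (\<forall>j<m. is_interval (J j)) \<and>
          (\<forall>i<m. \<forall>j<m. i \<noteq> j \<longrightarrow> J i \<inter> J j = {}) \<and>
          (\<forall>x \<in> (\<Union>j<m. J j). ratio_t (\<lambda>x. \<Sum>i<k. w i * ps i x) \<Delta> x \<ge> ereal (1/32 * \<tau>)) \<and>
          prob_dens (\<lambda>x. \<Sum>i<k. w i * ps i x) (\<Union>j<m. J j) \<ge>
            1 * prob_dens (\<lambda>x. \<Sum>i<k. w i * ps i x) {x. ratio_t (\<lambda>x. \<Sum>i<k. w i * ps i x) \<Delta> x \<ge> ereal \<tau>}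
              - 1 * \<delta> * real k / \<tau>min\<^sup>2"
    if H: "k \<ge> 1 \<and> (\<forall>i<k. w i \<ge> 0) \<and> (\<Sum>i<k. w i) = 1 \<and>
       (\<forall>i<k. is_density (ps i) \<and> log_concave (ps i) \<and> symmetric_fun (ps i)) \<and>
       0 < \<tau>min \<and> \<tau>min \<le> min (1 / real k) (1/2) \<and>
       0 < \<delta> \<and> \<delta> \<le> min (\<tau>min\<^sup>2 / real k) (1/2) \<and>
       \<tau>min \<le> \<tau> \<and> \<tau> \<le> 1" and D: "0 \<le> \<Delta>"
    for k :: nat and w :: "nat \<Rightarrow> real" and ps :: "nat \<Rightarrow> real \<Rightarrow> real" and \<Delta> \<tau>min \<delta> \<tau> :: real
  proof -
    interpret mixsetup k w ps \<Delta> \<tau>min \<delta> \<tau> using H D by unfold_locales auto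
    show ?thesis using main_loc unfolding p_eq .
  qed
  show ?thesis
  proof (rule exI[of _ 20], rule exI[of _ "1/32"], rule exI[of _ 1], rule exI[of _ 1], intro conjI allI impI)
    fix k :: nat and w :: "nat \<Rightarrow> real" and ps :: "nat \<Rightarrow> real \<Rightarrow> real" and \<Delta> \<tau>min \<delta> \<tau> :: real
    assume H: "k \<ge> 1 \<and> (\<forall>i<k. w i \<ge> 0) \<and> (\<Sum>i<k. w i) = 1 \<and>
       (\<forall>i<k. is_density (ps i) \<and> log_concave (ps i) \<and> symmetric_fun (ps i)) \<and>
       0 < \<tau>min \<and> \<tau>min \<le> min (1 / real k) (1/2) \<and>
       0 < \<delta> \<and> \<delta> \<le> min (\<tau>min\<^sup>2 / real k) (1/2) \<and>
       \<tau>min \<le> \<tau> \<and> \<tau> \<le> 1"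
    define P where "P = (\<lambda>x. \<Sum>i<k. w i * ps i x)"
    have Pm: "P \<in> borel_measurable borel" unfolding P_def
      using H by (intro borel_measurable_sum borel_measurable_times) (auto simp: is_density_def)
    have Ps: "P (- x) = P x" for x unfolding P_def using H by (simp add: symmetric_fun_def)
    have rt: "ratio_t P (- \<Delta>) (- x) = ratio_t P \<Delta> x" for x
    proof -
      have "P (- x + - \<Delta>) = P (x + \<Delta>)" using Ps[of "x + \<Delta>"] by simp
      then show ?thesis unfolding ratio_t_def using Ps[of x] by simp
    qed
    show "let p = (\<lambda>x. \<Sum>i<k. w i * ps i x) in
        \<exists>(m::nat) (J::nat \<Rightarrow> real set).
          real m \<le> 20 * real k * ln (1 / (\<delta> * \<tau>min)) \<and>
          (\<forall>j<m. is_interval (J j)) \<and>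
          (\<forall>i<m. \<forall>j<m. i \<noteq> j \<longrightarrow> J i \<inter> J j = {}) \<and>
          (\<forall>x \<in> (\<Union>j<m. J j). ratio_t p \<Delta> x \<ge> ereal (1/32 * \<tau>)) \<and>
          prob_dens p (\<Union>j<m. J j) \<ge>
            1 * prob_dens p {x. ratio_t p \<Delta> x \<ge> ereal \<tau>} - 1 * \<delta> * real k / \<tau>min\<^sup>2"
    proof (cases "0 \<le> \<Delta>")
      case True
      show ?thesis using key[OF H True] by (simp only: Let_def)
    next
      case False
      obtain m J where m: "real m \<le> 20 * real k * ln (1 / (\<delta> * \<tau>min))"
        and int: "\<forall>j<m. is_interval (J j)"
        and disj: "\<forall>i<m. \<forall>j<m. i \<noteq> j \<longrightarrow> J i \<inter> J j = {}"
        and rat: "\<forall>x \<in> (\<Union>j<m. J j). ratio_t P (- \<Delta>) x \<ge> ereal (1/32 * \<tau>)"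
        and meas: "prob_dens P (\<Union>j<m. J j) \<ge> 1 * prob_dens P {x. ratio_t P (- \<Delta>) x \<ge> ereal \<tau>} - 1 * \<delta> * real k / \<tau>min\<^sup>2"
        using key[OF H, of "- \<Delta>"] False unfolding P_def by auto
      define J' where "J' j = uminus ` J j" for j
      have int': "\<forall>j<m. is_interval (J' j)" unfolding J'_def using int interval_neg by auto
      have disj': "\<forall>i<m. \<forall>j<m. i \<noteq> j \<longrightarrow> J' i \<inter> J' j = {}"
        unfolding J'_def using disj by (auto simp: image_def) (metis disjoint_iff minus_minus)
      have rat': "\<forall>x \<in> (\<Union>j<m. J' j). ratio_t P \<Delta> x \<ge> ereal (1/32 * \<tau>)"
      proof
        fix x assume "x \<in> (\<Union>j<m. J' j)"
        then have "- x \<in> (\<Union>j<m. J j)" unfolding J'_def by auto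
        then have "ereal (1/32 * \<tau>) \<le> ratio_t P (- \<Delta>) (- x)" using rat by blast
        then show "ratio_t P \<Delta> x \<ge> ereal (1/32 * \<tau>)" using rt[of x] by simp
      qed
      have U1: "(\<Union>j<m. J' j) = uminus ` (\<Union>j<m. J j)" unfolding J'_def by (simp add: image_UN)
      have U2: "{x. ratio_t P \<Delta> x \<ge> ereal \<tau>} = uminus ` {x. ratio_t P (- \<Delta>) x \<ge> ereal \<tau>}"
      proof -
        show ?thesis
        proof
          show "{x. ratio_t P \<Delta> x \<ge> ereal \<tau>} \<subseteq> uminus ` {x. ratio_t P (- \<Delta>) x \<ge> ereal \<tau>}"
          proof
            fix x assume "x \<in> {x. ratio_t P \<Delta> x \<ge> ereal \<tau>}"
            then have "- x \<in> {x. ratio_t P (- \<Delta>) x \<ge> ereal \<tau>}" using rt[of x] by simp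
            then show "x \<in> uminus ` {x. ratio_t P (- \<Delta>) x \<ge> ereal \<tau>}" by (rule image_eqI[rotated]) simp
          qed
          show "uminus ` {x. ratio_t P (- \<Delta>) x \<ge> ereal \<tau>} \<subseteq> {x. ratio_t P \<Delta> x \<ge> ereal \<tau>}"
          proof
            fix y assume "y \<in> uminus ` {x. ratio_t P (- \<Delta>) x \<ge> ereal \<tau>}"
            then obtain z where z: "y = - z" "ratio_t P (- \<Delta>) z \<ge> ereal \<tau>" by auto
            have "ratio_t P (- \<Delta>) z = ratio_t P \<Delta> (- z)" using rt[of "- z"] by simp
            then show "y \<in> {x. ratio_t P \<Delta> x \<ge> ereal \<tau>}" using z by simp
          qed
        qed
      qed
      have meas': "prob_dens P (\<Union>j<m. J' j) \<ge> 1 * prob_dens P {x. ratio_t P \<Delta> x \<ge> ereal \<tau>} - 1 * \<delta> * real k / \<tau>min\<^sup>2"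
        unfolding U1 U2 dens_reflect[OF Pm Ps] using meas .
      show ?thesis using m int' disj' rat' meas' unfolding P_def Let_def by blast
    qed
  qed simp_all
qed



end
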